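(* Let $X$ be a Banach space, $f:X\to\mathbb{R}\cup\{+\infty\}$ convex and lower semicontinuous, $\bar x\in[f\le0]$, $\tau>0$, $q\in(0,1]$, and adopt the convention $0^0=1$. Consider the conditions: (i) there is a neighbourhood $U$ of $\bar x$ such that $\tau\, d(x,[f\le0])\le f_+^q(x)$ for all $x\in U$; (ii) there is a neighbourhood $U$ of $\bar x$ such that $q f^{q-1}(x)\, d(0,\partial f(x))\ge\tau$ for all $x\in U\cap[f>0]$; (iii) there is a neighbourhood $U$ of $\bar x$ such that $q^q(1-q)^{1-q}d(x,[f\le0])^{q-1}d(0,\partial f(x))^q\ge\tau$ for all $x\in U\cap[f>0]$. Then: (a) (ii) implies (i), and (i) implies (ii) with $q\tau$ in place of $\tau$ (i.e. if (i) holds with constant $\tau$ then (ii) holds with constant $q\tau$); (b) (iii) implies (i), and (i) implies (iii) with $q^q(1-q)^{1-q}\tau$ in place of $\tau$. If $q=1$, all the conditions are equivalent.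
   Context: $[f\le0]=\{x: f(x)\le0\}$, $[f>0]=\{x:f(x)>0\}$, $f_+(x)=\max\{f(x),0\}$; for $f(x)\ge0$, $f^q(x):=[f(x)]^q$, $f_+^q(x)=[f_+(x)]^q$. $d(x,A)=\inf_{a\in A}\|x-a\|$, $d(x,\emptyset)=+\infty$. $\partial f(x)$ is the subdifferential of convex analysis ($\emptyset$ if $f(x)=+\infty$); $d(0,\partial f(x))=\inf\{\|x^*\|:x^*\in\partial f(x)\}$ ($+\infty$ if empty). *)

theory Defs
  imports "HOL-Analysis.Analysis"
begin

text \<open>Extended-real-valued functions f : X -> R \<union> {+\<infinity>} are modelled as
  'a \<Rightarrow> ereal with f x \<noteq> -\<infinity> for all x.\<close>

text \<open>Power with the convention 0^0 = 1 (Isabelle's powr has 0 powr 0 = 0).\<close>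
definition cpow :: "real \<Rightarrow> real \<Rightarrow> real" where
  "cpow a b = (if b = 0 then 1 else a powr b)"

definition epow :: "ereal \<Rightarrow> real \<Rightarrow> ereal" where
  "epow e b = (if e = \<infinity> then \<infinity> else ereal (cpow (real_of_ereal e) b))"

definition convex_ext :: "('a::real_vector \<Rightarrow> ereal) \<Rightarrow> bool" where
  "convex_ext f \<longleftrightarrow> (\<forall>x y t. 0 \<le> t \<and> t \<le> 1 \<longrightarrow>
      f ((1 - t) *\<^sub>R x + t *\<^sub>R y) \<le> ereal (1 - t) * f x + ereal t * f y)"

definition lsc_ext :: "('a::topological_space \<Rightarrow> ereal) \<Rightarrow> bool" where
  "lsc_ext f \<longleftrightarrow> (\<forall>c::real. closed {x. f x \<le> ereal c})"

definition subdiff :: "('a::real_normed_vector \<Rightarrow> ereal) \<Rightarrow> 'a \<Rightarrow> ('a \<Rightarrow>\<^sub>L real) set" where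
  "subdiff f x = (if f x = \<infinity> then {} else
     {s. \<forall>y. f y \<ge> f x + ereal (blinfun_apply s (y - x))})"

text \<open>d(0, \<partial>f(x)) = inf of dual norms, +\<infinity> if \<partial>f(x) is empty.\<close>
definition dsub :: "('a::real_normed_vector \<Rightarrow> ereal) \<Rightarrow> 'a \<Rightarrow> ereal" where
  "dsub f x = Inf ((\<lambda>s. ereal (norm s)) ` subdiff f x)"

definition fplus_pow :: "('a \<Rightarrow> ereal) \<Rightarrow> real \<Rightarrow> 'a \<Rightarrow> ereal" where
  "fplus_pow f q x = (if f x = \<infinity> then \<infinity> else ereal (cpow (max (real_of_ereal (f x)) 0) q))"

definition cond_i :: "('a::real_normed_vector \<Rightarrow> ereal) \<Rightarrow> 'a \<Rightarrow> real \<Rightarrow> real \<Rightarrow> bool" where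
  "cond_i f xb q \<tau> \<longleftrightarrow> (\<exists>U. open U \<and> xb \<in> U \<and>
     (\<forall>x\<in>U. ereal (\<tau> * infdist x {y. f y \<le> 0}) \<le> fplus_pow f q x))"

text \<open>Condition (ii). Points with f x = +\<infinity> satisfy it automatically, since then
  \<partial>f(x) is empty and d(0,\<partial>f(x)) = +\<infinity>.\<close>
definition cond_ii :: "('a::real_normed_vector \<Rightarrow> ereal) \<Rightarrow> 'a \<Rightarrow> real \<Rightarrow> real \<Rightarrow> bool" where
  "cond_ii f xb q \<tau> \<longleftrightarrow> (\<exists>U. open U \<and> xb \<in> U \<and>
     (\<forall>x\<in>U. f x > 0 \<and> f x \<noteq> \<infinity> \<longrightarrow>
        ereal (q * cpow (real_of_ereal (f x)) (q - 1)) * dsub f x \<ge> ereal \<tau>))"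

definition cond_iii :: "('a::real_normed_vector \<Rightarrow> ereal) \<Rightarrow> 'a \<Rightarrow> real \<Rightarrow> real \<Rightarrow> bool" where
  "cond_iii f xb q \<tau> \<longleftrightarrow> (\<exists>U. open U \<and> xb \<in> U \<and>
     (\<forall>x\<in>U. f x > 0 \<and> f x \<noteq> \<infinity> \<longrightarrow>
        ereal (cpow q q * cpow (1 - q) (1 - q) * cpow (infdist x {y. f y \<le> 0}) (q - 1))
          * epow (dsub f x) q \<ge> ereal \<tau>))"

end

theory Submission
  imports Defs
begin


definition sublin :: "('a::real_vector \<Rightarrow> real) \<Rightarrow> bool" where
  "sublin q \<longleftrightarrow> (\<forall>x y. q (x + y) \<le> q x + q y) \<and> (\<forall>a x. a > 0 \<longrightarrow> q (a *\<^sub>R x) = a * q x)"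

lemma sublin_0: "sublin q \<Longrightarrow> q 0 = 0"
  unfolding sublin_def by (metis scaleR_zero_right mult_2 zero_less_numeral add_cancel_right_left) 

lemma sublin_neg: "sublin q \<Longrightarrow> - q (- x) \<le> q x"
proof -
  assume s: "sublin q"
  have "q (x + - x) \<le> q x + q (-x)" using s unfolding sublin_def by blast
  thus ?thesis using sublin_0[OF s] by simp
qed

lemma sublin_homI:
  assumes sub: "\<And>x y. q (x + y) \<le> q x + q y"
    and le: "\<And>a x. a > 0 \<Longrightarrow> q (a *\<^sub>R x) \<le> a * q x"
  shows "sublin q"
  unfolding sublin_def
proof (intro conjI allI impI sub)
  fix a :: real and x assume a: "a > 0"
  have e: "q x = q ((1/a) *\<^sub>R (a *\<^sub>R x))" using a by simp
  have "q ((1/a) *\<^sub>R (a *\<^sub>R x)) \<le> (1/a) * q (a *\<^sub>R x)" by (rule le) (simp add: a)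
  with e have "q x \<le> q (a *\<^sub>R x) / a" using a by simp
  hence "a * q x \<le> q (a *\<^sub>R x)" using a by (simp add: pos_le_divide_eq mult.commute)
  thus "q (a *\<^sub>R x) = a * q x" using le[OF a, of x] by linarith
qed

lemma minimal_sublin_linear:
  fixes q :: "'a::real_vector \<Rightarrow> real"
  assumes s: "sublin q"
    and minimal: "\<And>r. sublin r \<Longrightarrow> (\<forall>x. r x \<le> q x) \<Longrightarrow> r = q"
  shows "linear q"
proof -
  have add_ge: "q x + q a \<le> q (x + a)" for x a
  proof -
    define r where "r x = Inf ((\<lambda>t. q (x + t *\<^sub>R a) - t * q a) ` {0..})" for x
    have hom: "q (t *\<^sub>R a) = t * q a" if "t \<ge> 0" for t
      using s sublin_0[OF s] that unfolding sublin_def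
      by (cases "t = 0") auto
    have lb: "- q (- x) \<le> q (x + t *\<^sub>R a) - t * q a" if "t \<ge> 0" for x t
    proof -
      have "q (t *\<^sub>R a) \<le> q (x + t *\<^sub>R a) + q (- x)"
        using s unfolding sublin_def by (metis add.commute add_uminus_conv_diff diff_add_cancel)
      thus ?thesis using hom[OF that] by linarith
    qed
    have bdd: "bdd_below ((\<lambda>t. q (x + t *\<^sub>R a) - t * q a) ` {0..})" for x
      using lb by (intro bdd_belowI2[where m="- q (- x)"]) auto
    have rlow: "r x \<le> q (x + t *\<^sub>R a) - t * q a" if "t \<ge> 0" for x t
      unfolding r_def using bdd that by (intro cInf_lower) auto
    have rgreat: "c \<le> r x" if "\<And>t. t \<ge> 0 \<Longrightarrow> c \<le> q (x + t *\<^sub>R a) - t * q a" for c x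
      unfolding r_def using that by (intro cInf_greatest) auto
    have rq: "r x \<le> q x" for x using rlow[of 0 x] by simp
    have "sublin r"
    proof (rule sublin_homI)
      fix x y
      have "r (x + y) - r y \<le> r x"
      proof (rule rgreat)
        fix t :: real assume t: "t \<ge> 0"
        have "r (x + y) - (q (x + t *\<^sub>R a) - t * q a) \<le> r y"
        proof (rule rgreat)
          fix u :: real assume u: "u \<ge> 0"
          have "r (x + y) \<le> q (x + y + (t + u) *\<^sub>R a) - (t + u) * q a"
            using rlow t u by simp
          also have "x + y + (t + u) *\<^sub>R a = (x + t *\<^sub>R a) + (y + u *\<^sub>R a)"
            by (simp add: algebra_simps)
          also have "q (x + t *\<^sub>R a + (y + u *\<^sub>R a)) \<le> q (x + t *\<^sub>R a) + q (y + u *\<^sub>R a)"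
            using s unfolding sublin_def by blast
          finally show "r (x + y) - (q (x + t *\<^sub>R a) - t * q a) \<le> q (y + u *\<^sub>R a) - u * q a"
            by (simp add: algebra_simps)
        qed
        thus "r (x + y) - r y \<le> q (x + t *\<^sub>R a) - t * q a" by linarith
      qed
      thus "r (x + y) \<le> r x + r y" by linarith
    next
      fix c :: real and x assume c: "c > 0"
      have "r (c *\<^sub>R x) / c \<le> r x"
      proof (rule rgreat)
        fix t :: real assume t: "t \<ge> 0"
        have "r (c *\<^sub>R x) \<le> q (c *\<^sub>R x + (c * t) *\<^sub>R a) - (c * t) * q a"
          using rlow c t by simp
        also have "c *\<^sub>R x + (c * t) *\<^sub>R a = c *\<^sub>R (x + t *\<^sub>R a)" by (simp add: algebra_simps)
        also have "q (c *\<^sub>R (x + t *\<^sub>R a)) = c * q (x + t *\<^sub>R a)" using s c unfolding sublin_def by blast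
        finally show "r (c *\<^sub>R x) / c \<le> q (x + t *\<^sub>R a) - t * q a"
          using c by (simp add: field_simps)
      qed
      thus "r (c *\<^sub>R x) \<le> c * r x" using c by (simp add: field_simps)
    qed
    hence "r = q" using minimal rq by blast
    thus ?thesis using rlow[of 1 x] by simp
  qed
  have additive: "q (x + y) = q x + q y" for x y
    using add_ge[of x y] s unfolding sublin_def by (meson antisym)
  have q0: "q 0 = 0" using sublin_0[OF s] .
  have qneg: "q (- x) = - q x" for x using additive[of x "-x"] q0 by simp
  show ?thesis
  proof (rule linearI)
    fix x y show "q (x + y) = q x + q y" by (rule additive)
  next
    fix c :: real and x
    show "q (c *\<^sub>R x) = c *\<^sub>R q x"
    proof (cases "c > 0")
      case True thus ?thesis using s unfolding sublin_def by simp
    next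
      case False
      show ?thesis
      proof (cases "c = 0")
        case True thus ?thesis using q0 by simp
      next
        case False
        hence "-c > 0" using \<open>\<not> c > 0\<close> by simp
        hence "q ((-c) *\<^sub>R x) = (-c) * q x" using s unfolding sublin_def by blast
        moreover have "q (c *\<^sub>R x) = - q ((-c) *\<^sub>R x)" using qneg[of "(-c) *\<^sub>R x"] by simp
        ultimately show ?thesis by simp
      qed
    qed
  qed
qed



lemma hahn_banach_sublin:
  fixes p :: "'a::real_vector \<Rightarrow> real"
  assumes sp: "sublin p"
  shows "\<exists>l. linear l \<and> (\<forall>x. l x \<le> p x)"
proof -
  define M where "M = {q. sublin q \<and> (\<forall>x. q x \<le> p x)}"
  define r where "r = {(q1, q2). q1 \<in> M \<and> q2 \<in> M \<and> (\<forall>x. q2 x \<le> q1 x)}"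
  have pM: "p \<in> M" using sp unfolding M_def by auto
  have Fr: "Field r = M" unfolding r_def Field_def by auto
  have po: "Partial_order r"
    unfolding partial_order_on_def preorder_on_def refl_on_def trans_on_def antisym_on_def Fr
    unfolding r_def by (auto intro: order_trans) (meson antisym ext)
  have "\<exists>m\<in>Field r. \<forall>a\<in>Field r. (m, a) \<in> r \<longrightarrow> a = m"
  proof (rule Zorns_po_lemma[OF po])
    fix C assume C: "C \<in> Chains r"
    hence CM: "C \<subseteq> M" and comp: "\<And>a b. a \<in> C \<Longrightarrow> b \<in> C \<Longrightarrow> (\<forall>x. a x \<le> b x) \<or> (\<forall>x. b x \<le> a x)"
      unfolding Chains_def r_def by auto
    show "\<exists>u\<in>Field r. \<forall>a\<in>C. (a, u) \<in> r"
    proof (cases "C = {}")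
      case True thus ?thesis using pM Fr by auto
    next
      case False
      define u where "u x = Inf ((\<lambda>q. q x) ` C)" for x
      have lbq: "- p (- x) \<le> q x" if "q \<in> C" for q x
      proof -
        have "sublin q" "q (- x) \<le> p (- x)" using that CM unfolding M_def by auto
        thus ?thesis using sublin_neg[of q x] by linarith
      qed
      have bdd: "bdd_below ((\<lambda>q. q x) ` C)" for x
        using lbq by (intro bdd_belowI2[where m="- p (- x)"]) auto
      have ulow: "u x \<le> q x" if "q \<in> C" for q x
        unfolding u_def using bdd that by (intro cInf_lower) auto
      have ugreat: "c \<le> u x" if "\<And>q. q \<in> C \<Longrightarrow> c \<le> q x" for c x
        unfolding u_def using that False by (intro cInf_greatest) auto
      have sq: "sublin q" if "q \<in> C" for q using that CM unfolding M_def by auto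
      have "sublin u"
      proof (rule sublin_homI)
        fix x y
        have "u (x + y) - u y \<le> u x"
        proof (rule ugreat)
          fix q1 assume q1: "q1 \<in> C"
          have "u (x + y) - q1 x \<le> u y"
          proof (rule ugreat)
            fix q2 assume q2: "q2 \<in> C"
            show "u (x + y) - q1 x \<le> q2 y"
            proof (cases "\<forall>x. q1 x \<le> q2 x")
              case True
              have "u (x + y) \<le> q1 (x + y)" by (rule ulow[OF q1])
              also have "\<dots> \<le> q1 x + q1 y" using sq[OF q1] unfolding sublin_def by blast
              finally show ?thesis using True[rule_format, of y] by linarith
            next
              case F: False
              hence T: "\<forall>x. q2 x \<le> q1 x" using comp[OF q1 q2] by auto
              have "u (x + y) \<le> q2 (x + y)" by (rule ulow[OF q2])
              also have "\<dots> \<le> q2 x + q2 y" using sq[OF q2] unfolding sublin_def by blast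
              finally show ?thesis using T[rule_format, of x] by linarith
            qed
          qed
          thus "u (x + y) - u y \<le> q1 x" by linarith
        qed
        thus "u (x + y) \<le> u x + u y" by linarith
      next
        fix a :: real and x assume a: "a > 0"
        have "u (a *\<^sub>R x) / a \<le> u x"
        proof (rule ugreat)
          fix q assume q: "q \<in> C"
          have "u (a *\<^sub>R x) \<le> q (a *\<^sub>R x)" by (rule ulow[OF q])
          also have "\<dots> = a * q x" using sq[OF q] a unfolding sublin_def by blast
          finally show "u (a *\<^sub>R x) / a \<le> q x" using a by (simp add: field_simps)
        qed
        thus "u (a *\<^sub>R x) \<le> a * u x" using a by (simp add: field_simps)
      qed
      moreover have "\<forall>x. u x \<le> p x"
      proof
        fix x
        obtain q where "q \<in> C" using False by auto
        hence "q x \<le> p x" using CM unfolding M_def by auto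
        thus "u x \<le> p x" using ulow[OF \<open>q \<in> C\<close>, of x] by linarith
      qed
      ultimately have uM: "u \<in> M" unfolding M_def by auto
      show ?thesis
        using uM CM ulow unfolding Fr unfolding r_def by blast
    qed
  qed
  then obtain m where mM: "m \<in> M" and mmin: "\<And>a. a \<in> M \<Longrightarrow> (m, a) \<in> r \<Longrightarrow> a = m"
    using Fr by auto
  have "linear m"
  proof (rule minimal_sublin_linear)
    show "sublin m" using mM unfolding M_def by auto
    fix q assume "sublin q" "\<forall>x. q x \<le> m x"
    moreover hence "q \<in> M" using mM unfolding M_def by (auto intro: order_trans)
    ultimately show "q = m" using mmin mM unfolding r_def by auto
  qed
  thus ?thesis using mM unfolding M_def by auto
qed



lemma ekeland:
  fixes g :: "'a::complete_space \<Rightarrow> ereal" and x0 :: 'a and k :: real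
  assumes lsc: "\<And>c. closed {x. g x \<le> ereal c}" and nn: "\<And>x. g x \<ge> 0"
    and fin: "g x0 \<noteq> \<infinity>" and k: "k > 0"
  shows "\<exists>u. g u \<noteq> \<infinity> \<and> real_of_ereal (g u) + k * dist u x0 \<le> real_of_ereal (g x0)
     \<and> (\<forall>w. g w \<noteq> \<infinity> \<longrightarrow> real_of_ereal (g u) \<le> real_of_ereal (g w) + k * dist w u)"
proof -
  define G where "G x = real_of_ereal (g x)" for x
  have gG: "g x = ereal (G x)" if "g x \<noteq> \<infinity>" for x
    using that nn[of x] unfolding G_def by (cases "g x") auto
  have G0: "G x \<ge> 0" for x using nn[of x] unfolding G_def by (cases "g x") auto
  define S where "S y = {w. g w \<noteq> \<infinity> \<and> G w + k * dist w y \<le> G y}" for y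
  have self: "y \<in> S y" if "g y \<noteq> \<infinity>" for y using that unfolding S_def by auto
  have trans: "w \<in> S z" if "w \<in> S y" "y \<in> S z" for w y z
  proof -
    have "dist w z \<le> dist w y + dist y z" by (rule dist_triangle)
    hence "k * dist w z \<le> k * (dist w y + dist y z)" using k by simp
    hence "k * dist w z \<le> k * dist w y + k * dist y z" by (simp add: distrib_left)
    thus ?thesis using that unfolding S_def by auto
  qed
  have closedS: "closed (S y)" for y
  proof (unfold closed_sequential_limits, intro allI impI, elim conjE)
    fix s l assume sS: "\<forall>n. s n \<in> S y" and lim: "s \<longlonglongrightarrow> l"
    have le0: "l \<in> {x. g x \<le> ereal (G y - k * dist l y + e)}" if e: "e > 0" for e
    proof (rule Lim_in_closed_set[OF lsc _ _ lim])
      have "(\<lambda>n. dist (s n) y) \<longlonglongrightarrow> dist l y" by (intro tendsto_intros lim)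
      hence "eventually (\<lambda>n. dist (s n) y > dist l y - e / k) sequentially"
        using e k by (intro order_tendstoD) auto
      thus "eventually (\<lambda>n. s n \<in> {x. g x \<le> ereal (G y - k * dist l y + e)}) sequentially"
      proof (rule eventually_mono)
        fix n assume d: "dist (s n) y > dist l y - e / k"
        have "k * (dist l y - e / k) \<le> k * dist (s n) y" using d k by simp
        hence "k * dist l y - e \<le> k * dist (s n) y" using k by (simp add: algebra_simps)
        moreover have "g (s n) \<noteq> \<infinity>" "G (s n) + k * dist (s n) y \<le> G y" using sS unfolding S_def by auto
        ultimately have "G (s n) \<le> G y - k * dist l y + e" by linarith
        thus "s n \<in> {x. g x \<le> ereal (G y - k * dist l y + e)}"
          using gG[OF \<open>g (s n) \<noteq> \<infinity>\<close>] by simp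
      qed
    qed simp
    have le: "g l \<le> ereal (G y - k * dist l y + e)" if e: "e > 0" for e using le0[OF e] by simp
    have gl: "g l \<noteq> \<infinity>" using le[of 1] by auto
    have "G l \<le> G y - k * dist l y + e" if "e > 0" for e
      using le[OF that] gG[OF gl] by simp
    hence "G l \<le> G y - k * dist l y" by (meson field_le_epsilon)
    thus "l \<in> S y" using gl unfolding S_def by simp
  qed
  define m where "m y = Inf (G ` S y)" for y
  have bddG: "bdd_below (G ` S y)" for y using G0 by (intro bdd_belowI2[where m=0]) auto
  have mlow: "m y \<le> G w" if "w \<in> S y" for y w
    unfolding m_def using bddG that by (intro cInf_lower) auto
  have ex: "\<exists>w. w \<in> S y \<and> G w < m y + 1 / (real n + 1)" if "g y \<noteq> \<infinity>" for y n
  proof -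
    have ne: "G ` S y \<noteq> {}" using self[OF that] by auto
    have "Inf (G ` S y) < m y + 1 / (real n + 1)" unfolding m_def by simp
    from cInf_lessD[OF ne this] obtain z where "z \<in> G ` S y" "z < m y + 1 / (real n + 1)" by blast
    thus ?thesis by blast
  qed
  define nx where "nx n y = (SOME w. w \<in> S y \<and> G w < m y + 1 / (real n + 1))" for n y
  have nx: "nx n y \<in> S y \<and> G (nx n y) < m y + 1 / (real n + 1)" if "g y \<noteq> \<infinity>" for y n
    unfolding nx_def by (rule someI_ex[OF ex[OF that]])
  define xs where "xs = rec_nat x0 (\<lambda>n y. nx n y)"
  have xs0: "xs 0 = x0" and xsS: "xs (Suc n) = nx n (xs n)" for n unfolding xs_def by simp_all
  have finx: "g (xs n) \<noteq> \<infinity>" for n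
  proof (induction n)
    case 0 thus ?case using fin xs0 by simp
  next
    case (Suc n)
    have "nx n (xs n) \<in> S (xs n)" using nx[OF Suc] by blast
    thus ?case using xsS[of n] unfolding S_def by simp
  qed
  have step: "xs (Suc n) \<in> S (xs n)" and stepG: "G (xs (Suc n)) < m (xs n) + 1 / (real n + 1)" for n
    using nx[OF finx[of n], of n] xsS[of n] by auto
  define T where "T n = S (xs (Suc n))" for n
  have Tdec1: "T (Suc n) \<subseteq> T n" for n unfolding T_def using trans step by blast
  have Tdec: "T n \<subseteq> T m'" if "m' \<le> n" for m' n
    using lift_Suc_antimono_le[of T, OF Tdec1 that] .
  have Tne: "T n \<noteq> {}" for n using self[OF finx[of "Suc n"]] unfolding T_def by auto
  have Tsmall: "k * dist w (xs (Suc n)) \<le> 1 / (real n + 1)" if "w \<in> T n" for w n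
  proof -
    have "w \<in> S (xs n)" using that trans step unfolding T_def by blast
    hence "m (xs n) \<le> G w" by (rule mlow)
    moreover have "G w + k * dist w (xs (Suc n)) \<le> G (xs (Suc n))" using that unfolding T_def S_def by auto
    ultimately show ?thesis using stepG[of n] by linarith
  qed
  have Tdiam: "dist w v \<le> 2 / (k * (real n + 1))" if "w \<in> T n" "v \<in> T n" for w v n
  proof -
    have "k * dist w v \<le> k * (dist w (xs (Suc n)) + dist v (xs (Suc n)))"
      using k dist_triangle2[of w v "xs (Suc n)"] by simp
    hence "k * dist w v \<le> k * dist w (xs (Suc n)) + k * dist v (xs (Suc n))" by (simp add: distrib_left)
    also have "\<dots> \<le> 1 / (real n + 1) + 1 / (real n + 1)" using Tsmall[OF that(1)] Tsmall[OF that(2)] by linarith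
    also have "\<dots> = 2 / (real n + 1)" by simp
    finally have "dist w v * (k * (real n + 1)) \<le> 2" using k by (simp add: field_simps)
    moreover have "k * (real n + 1) > 0" using k by simp
    ultimately show ?thesis by (simp add: pos_le_divide_eq)
  qed
  have small: "\<exists>n. \<forall>x\<in>T n. \<forall>y\<in>T n. dist x y < e" if e: "e > 0" for e
  proof -
    obtain n :: nat where n: "real n > 2 / (k * e)" using reals_Archimedean2 by blast
    have "2 / (k * (real n + 1)) < e"
    proof -
      have "2 / (k * e) < real n + 1" using n by linarith
      hence "2 < (real n + 1) * (k * e)" using k e by (simp add: pos_divide_less_eq)
      hence "2 < e * (k * (real n + 1))" by (simp add: algebra_simps)
      moreover have "k * (real n + 1) > 0" using k by simp
      ultimately show ?thesis by (simp add: pos_divide_less_eq)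
    qed
    thus ?thesis using Tdiam by (meson le_less_trans)
  qed
  obtain u where uT: "\<And>n. u \<in> T n"
  proof (rule decreasing_closed_nest[of T])
    show "closed (T n)" for n unfolding T_def by (rule closedS)
  qed (use Tne Tdec small in auto)
  have uS0: "u \<in> S x0" using trans[OF uT[of 0, unfolded T_def] step[of 0]] xs0 by simp
  have "\<forall>w. g w \<noteq> \<infinity> \<longrightarrow> G u \<le> G w + k * dist w u"
  proof (intro allI impI)
    fix w assume gw: "g w \<noteq> \<infinity>"
    show "G u \<le> G w + k * dist w u"
    proof (rule ccontr)
      assume "\<not> ?thesis"
      hence wS: "w \<in> S u" using gw unfolding S_def by auto
      have "dist w u < e" if epos: "e > 0" for e
      proof -
        obtain n where "\<forall>x\<in>T n. \<forall>y\<in>T n. dist x y < e" using small[OF epos] by blast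
        moreover have "w \<in> T n" using trans[OF wS uT[of n, unfolded T_def]] unfolding T_def by simp
        ultimately show ?thesis using uT by blast
      qed
      hence "w = u" by (metis less_irrefl zero_less_dist_iff)
      thus False using \<open>\<not> G u \<le> G w + k * dist w u\<close> by simp
    qed
  qed
  thus ?thesis using uS0 unfolding S_def G_def by auto
qed



lemma conv_real:
  fixes f :: "'a::real_vector \<Rightarrow> ereal"
  assumes nm: "\<forall>x. f x \<noteq> -\<infinity>" and cv: "convex_ext f"
    and fx: "f x \<noteq> \<infinity>" and fy: "f y \<noteq> \<infinity>" and t: "0 \<le> t" "t \<le> 1"
  shows "f ((1 - t) *\<^sub>R x + t *\<^sub>R y) \<noteq> \<infinity> \<and>
    real_of_ereal (f ((1 - t) *\<^sub>R x + t *\<^sub>R y)) \<le> (1 - t) * real_of_ereal (f x) + t * real_of_ereal (f y)"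
proof -
  obtain a where a: "f x = ereal a" using fx nm by (cases "f x") auto
  obtain b where b: "f y = ereal b" using fy nm by (cases "f y") auto
  have le: "f ((1 - t) *\<^sub>R x + t *\<^sub>R y) \<le> ereal ((1 - t) * a + t * b)"
  proof -
    have "f ((1 - t) *\<^sub>R x + t *\<^sub>R y) \<le> ereal (1 - t) * f x + ereal t * f y"
      using cv t unfolding convex_ext_def by blast
    thus ?thesis unfolding a b by simp
  qed
  obtain c where c: "f ((1 - t) *\<^sub>R x + t *\<^sub>R y) = ereal c"
    using le nm by (cases "f ((1 - t) *\<^sub>R x + t *\<^sub>R y)") auto
  show ?thesis using le c a b by simp
qed

lemma subgrad_exists:
  fixes f :: "'a::real_normed_vector \<Rightarrow> ereal" and u :: 'a and k :: real
  assumes nm: "\<forall>x. f x \<noteq> -\<infinity>" and cv: "convex_ext f" and fu: "f u \<noteq> \<infinity>" and k: "k \<ge> 0"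
    and glob: "\<And>w. f w \<noteq> \<infinity> \<Longrightarrow> real_of_ereal (f u) - k * norm (w - u) \<le> real_of_ereal (f w)"
  shows "\<exists>s \<in> subdiff f u. norm s \<le> k"
proof -
  define F where "F x = real_of_ereal (f x)" for x
  have fF: "f x = ereal (F x)" if "f x \<noteq> \<infinity>" for x
    using that nm unfolding F_def by (cases "f x") auto
  define Q where "Q t h = (F (u + t *\<^sub>R h) - F u) / t" for t h
  define E where "E h = {Q t h' + k * norm (h - h') | t h'. t > 0 \<and> f (u + t *\<^sub>R h') \<noteq> \<infinity>}" for h
  define p where "p h = Inf (E h)" for h
  have mem0: "k * norm h \<in> E h" for h
  proof -
    have "Q 1 0 + k * norm (h - 0) \<in> E h" unfolding E_def using fu
      by (intro CollectI exI[of _ 1] exI[of _ 0]) simp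
    thus ?thesis unfolding Q_def by simp
  qed
  have Qlow: "Q t h' \<ge> - k * norm h'" if "t > 0" "f (u + t *\<^sub>R h') \<noteq> \<infinity>" for t h'
  proof -
    have "F u - k * norm (u + t *\<^sub>R h' - u) \<le> F (u + t *\<^sub>R h')" using glob[OF that(2)] unfolding F_def .
    hence "F u - k * (t * norm h') \<le> F (u + t *\<^sub>R h')" using that(1) by simp
    hence "- k * norm h' * t \<le> F (u + t *\<^sub>R h') - F u" by (simp add: algebra_simps)
    thus ?thesis unfolding Q_def using that(1) by (simp add: pos_le_divide_eq)
  qed
  have Elow: "e \<ge> - k * norm h" if em: "e \<in> E h" for e h
  proof -
    obtain t h' where e: "e = Q t h' + k * norm (h - h')" "t > 0" "f (u + t *\<^sub>R h') \<noteq> \<infinity>"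
      using em unfolding E_def by blast
    have "norm h' \<le> norm h + norm (h - h')" using norm_triangle_sub[of h' h] norm_minus_commute[of h' h] by simp
    hence "k * norm h' \<le> k * (norm h + norm (h - h'))" using k by (rule mult_left_mono)
    hence "k * norm h' \<le> k * norm h + k * norm (h - h')" by (simp add: distrib_left)
    thus ?thesis using Qlow[OF e(2,3)] e(1) by linarith
  qed
  have bddE: "bdd_below (E h)" for h using Elow by (intro bdd_belowI[where m="- k * norm h"]) auto
  have plow: "p h \<le> e" if "e \<in> E h" for e h unfolding p_def using that bddE[of h] by (rule cInf_lower)
  have pgreat: "c \<le> p h" if "\<And>e. e \<in> E h \<Longrightarrow> c \<le> e" for c h
    unfolding p_def using that mem0 by (intro cInf_greatest) auto
  have Qmono: "f (u + t *\<^sub>R h) \<noteq> \<infinity> \<and> Q t h \<le> Q t1 h"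
    if "0 < t" "t \<le> t1" "f (u + t1 *\<^sub>R h) \<noteq> \<infinity>" for t t1 h
  proof -
    define s where "s = t / t1"
    have s: "0 \<le> s" "s \<le> 1" using that unfolding s_def by auto
    have eq: "(1 - s) *\<^sub>R u + s *\<^sub>R (u + t1 *\<^sub>R h) = u + t *\<^sub>R h"
      using that unfolding s_def by (simp add: algebra_simps)
    have c: "f (u + t *\<^sub>R h) \<noteq> \<infinity> \<and> F (u + t *\<^sub>R h) \<le> (1 - s) * F u + s * F (u + t1 *\<^sub>R h)"
      using conv_real[OF nm cv fu that(3) s] unfolding eq F_def .
    hence "F (u + t *\<^sub>R h) - F u \<le> s * (F (u + t1 *\<^sub>R h) - F u)" by (simp add: algebra_simps)
    hence "(F (u + t *\<^sub>R h) - F u) / t \<le> (F (u + t1 *\<^sub>R h) - F u) / t1"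
      using that unfolding s_def by (simp add: field_simps)
    thus ?thesis using c unfolding Q_def by simp
  qed
  have Qmid: "f (u + (t/2) *\<^sub>R (h1 + h2)) \<noteq> \<infinity> \<and> Q (t/2) (h1 + h2) \<le> Q t h1 + Q t h2"
    if "0 < t" "f (u + t *\<^sub>R h1) \<noteq> \<infinity>" "f (u + t *\<^sub>R h2) \<noteq> \<infinity>" for t h1 h2
  proof -
    have hh: "(1/2::real) *\<^sub>R u + (1/2) *\<^sub>R u = u"
      by (metis scaleR_add_left field_sum_of_halves scaleR_one)
    have "(1 - 1/2) *\<^sub>R (u + t *\<^sub>R h1) + (1/2) *\<^sub>R (u + t *\<^sub>R h2) = ((1/2::real) *\<^sub>R u + (1/2) *\<^sub>R u) + (t/2) *\<^sub>R (h1 + h2)"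
      by (simp add: algebra_simps)
    hence eq: "(1 - 1/2) *\<^sub>R (u + t *\<^sub>R h1) + (1/2) *\<^sub>R (u + t *\<^sub>R h2) = u + (t/2) *\<^sub>R (h1 + h2)"
      unfolding hh .
    have c: "f (u + (t/2) *\<^sub>R (h1 + h2)) \<noteq> \<infinity> \<and>
        F (u + (t/2) *\<^sub>R (h1 + h2)) \<le> (1 - 1/2) * F (u + t *\<^sub>R h1) + (1/2) * F (u + t *\<^sub>R h2)"
      using conv_real[OF nm cv that(2,3), of "1/2"] unfolding eq F_def by simp
    have "(F (u + (t/2) *\<^sub>R (h1 + h2)) - F u) / (t/2)
        \<le> (F (u + t *\<^sub>R h1) - F u) / t + (F (u + t *\<^sub>R h2) - F u) / t"
    proof -
      define A where "A = F (u + (t/2) *\<^sub>R (h1 + h2))"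
      define B1 where "B1 = F (u + t *\<^sub>R h1)"
      define B2 where "B2 = F (u + t *\<^sub>R h2)"
      have "A \<le> (1 - 1/2) * B1 + (1/2) * B2" using c unfolding A_def B1_def B2_def by blast
      hence "2 * (A - F u) \<le> (B1 - F u) + (B2 - F u)" by (simp add: algebra_simps)
      hence le2: "2 * (A - F u) / t \<le> ((B1 - F u) + (B2 - F u)) / t" using that(1) by (simp add: divide_right_mono)
      have "(A - F u) / (t/2) = 2 * (A - F u) / t" by simp
      also have "\<dots> \<le> ((B1 - F u) + (B2 - F u)) / t" by (rule le2)
      also have "\<dots> = (B1 - F u) / t + (B2 - F u) / t" by (rule add_divide_distrib)
      finally show ?thesis unfolding A_def B1_def B2_def .
    qed
    thus ?thesis using c unfolding Q_def by simp
  qed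
  have "sublin p"
  proof (rule sublin_homI)
    fix x y
    have "p (x + y) - p y \<le> p x"
    proof (rule pgreat)
      fix e1 assume "e1 \<in> E x"
      then obtain t1 h1 where e1: "e1 = Q t1 h1 + k * norm (x - h1)" "t1 > 0" "f (u + t1 *\<^sub>R h1) \<noteq> \<infinity>"
        unfolding E_def by blast
      have "p (x + y) - e1 \<le> p y"
      proof (rule pgreat)
        fix e2 assume "e2 \<in> E y"
        then obtain t2 h2 where e2: "e2 = Q t2 h2 + k * norm (y - h2)" "t2 > 0" "f (u + t2 *\<^sub>R h2) \<noteq> \<infinity>"
          unfolding E_def by blast
        define t where "t = min t1 t2"
        have t: "0 < t" "t \<le> t1" "t \<le> t2" using e1 e2 unfolding t_def by auto
        have m1: "f (u + t *\<^sub>R h1) \<noteq> \<infinity> \<and> Q t h1 \<le> Q t1 h1" using Qmono[OF t(1,2) e1(3)] .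
        have m2: "f (u + t *\<^sub>R h2) \<noteq> \<infinity> \<and> Q t h2 \<le> Q t2 h2" using Qmono[OF t(1,3) e2(3)] .
        have md: "f (u + (t/2) *\<^sub>R (h1 + h2)) \<noteq> \<infinity> \<and> Q (t/2) (h1 + h2) \<le> Q t h1 + Q t h2"
          using Qmid[OF t(1)] m1 m2 by blast
        have mem: "Q (t/2) (h1 + h2) + k * norm (x + y - (h1 + h2)) \<in> E (x + y)"
          unfolding E_def using md t(1) by force
        have eqn: "x + y - (h1 + h2) = (x - h1) + (y - h2)" by simp
        have "norm (x + y - (h1 + h2)) \<le> norm (x - h1) + norm (y - h2)"
          unfolding eqn by (rule norm_triangle_ineq)
        hence "k * norm (x + y - (h1 + h2)) \<le> k * (norm (x - h1) + norm (y - h2))"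
          using k by (rule mult_left_mono)
        hence "k * norm (x + y - (h1 + h2)) \<le> k * norm (x - h1) + k * norm (y - h2)"
          by (simp add: distrib_left)
        hence "p (x + y) \<le> e1 + e2" using plow[OF mem] md m1 m2 e1(1) e2(1) by linarith
        thus "p (x + y) - e1 \<le> e2" by linarith
      qed
      thus "p (x + y) - p y \<le> e1" by linarith
    qed
    thus "p (x + y) \<le> p x + p y" by linarith
  next
    fix a :: real and x assume a: "a > 0"
    have "p (a *\<^sub>R x) / a \<le> p x"
    proof (rule pgreat)
      fix e assume "e \<in> E x"
      then obtain t h where e: "e = Q t h + k * norm (x - h)" "t > 0" "f (u + t *\<^sub>R h) \<noteq> \<infinity>"
        unfolding E_def by blast
      have eq: "u + (t / a) *\<^sub>R (a *\<^sub>R h) = u + t *\<^sub>R h" using a by simp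
      have mem: "Q (t / a) (a *\<^sub>R h) + k * norm (a *\<^sub>R x - a *\<^sub>R h) \<in> E (a *\<^sub>R x)"
        unfolding E_def using e a eq by (intro CollectI exI[of _ "t / a"] exI[of _ "a *\<^sub>R h"]) simp
      have "Q (t / a) (a *\<^sub>R h) = a * Q t h" unfolding Q_def eq using a e(2) by (simp add: field_simps)
      moreover have "norm (a *\<^sub>R x - a *\<^sub>R h) = a * norm (x - h)"
      proof -
        have "a *\<^sub>R x - a *\<^sub>R h = a *\<^sub>R (x - h)" by (simp add: scaleR_right_diff_distrib)
        thus ?thesis using a by simp
      qed
      ultimately have "p (a *\<^sub>R x) \<le> a * e" using plow[OF mem] e(1) by (simp add: algebra_simps)
      thus "p (a *\<^sub>R x) / a \<le> e" using a by (simp add: field_simps)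
    qed
    thus "p (a *\<^sub>R x) \<le> a * p x" using a by (simp add: field_simps)
  qed
  then obtain l where lin: "linear l" and lp: "\<And>x. l x \<le> p x" using hahn_banach_sublin by blast
  have lk: "l h \<le> k * norm h" for h using lp[of h] plow[OF mem0[of h]] by linarith
  have labs: "norm (l h) \<le> k * norm h" for h
  proof -
    have "l (- h) = - l h" using lin by (simp add: linear_neg)
    thus ?thesis using lk[of h] lk[of "-h"] by auto
  qed
  have bl: "bounded_linear l"
    using lin labs by (intro bounded_linear_intro[where K=k]) (auto simp: linear_add linear_scale mult.commute)
  define s where "s = Blinfun l"
  have sapp: "blinfun_apply s = l" unfolding s_def using bl by (rule bounded_linear_Blinfun_apply)
  have ns: "norm s \<le> k" using k labs by (intro norm_blinfun_bound) (auto simp: sapp)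
  have "s \<in> subdiff f u"
    unfolding subdiff_def using fu
  proof (simp, intro allI)
    fix y
    show "f u + ereal (blinfun_apply s (y - u)) \<le> f y"
    proof (cases "f y = \<infinity>")
      case True thus ?thesis by simp
    next
      case False
      have eq: "u + 1 *\<^sub>R (y - u) = y" by simp
      have mem: "Q 1 (y - u) + k * norm ((y - u) - (y - u)) \<in> E (y - u)"
        unfolding E_def using False eq by (intro CollectI exI[of _ 1] exI[of _ "y - u"]) simp
      hence "l (y - u) \<le> F y - F u" using lp[of "y - u"] plow[OF mem] unfolding Q_def eq by simp
      thus ?thesis using fF[OF False] fF[OF fu] sapp by simp
    qed
  qed
  thus ?thesis using ns by blast
qed



lemma powr_tangent:
  fixes a b p :: real
  assumes a: "a > 0" and b: "b > 0" and p: "0 < p" "p \<le> 1"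
  shows "a powr p \<le> b powr p + p * b powr (p - 1) * (a - b)"
proof -
  have "(a / b) powr p * 1 powr (1 - p) \<le> p * (a / b) + (1 - p) * 1"
    using Youngs_inequality_0[of p "1 - p" "a / b" 1] a b p by simp
  hence y: "(a / b) powr p \<le> p * (a / b) + (1 - p)" by simp
  have bp: "b powr p > 0" using b by simp
  have "a powr p = b powr p * (a / b) powr p" using bp by (simp add: powr_divide)
  also have "\<dots> \<le> b powr p * (p * (a / b) + (1 - p))" using y bp by (simp add: mult_left_mono)
  also have "\<dots> = b powr p + p * (b powr p / b) * (a - b)" using b by (simp add: field_simps)
  also have "b powr p / b = b powr (p - 1)" using b by (simp add: powr_diff)
  finally show ?thesis .
qed

lemma fplus_pow_fin:
  assumes "f x \<noteq> \<infinity>"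
  shows "fplus_pow f q x = ereal ((max (real_of_ereal (f x)) 0) powr q) \<or> q = 0"
  using assms unfolding fplus_pow_def cpow_def by auto

lemma slope_point:
  fixes f :: "'a::banach \<Rightarrow> ereal" and x :: 'a and p lam :: real
  assumes nm: "\<forall>x. f x \<noteq> -\<infinity>" and cv: "convex_ext f" and lsc: "lsc_ext f"
    and p: "0 < p" "p \<le> 1" and fx: "0 < f x" "f x \<noteq> \<infinity>"
    and lam: "lam > 0" and lamd: "lam < infdist x {y. f y \<le> 0}"
  shows "\<exists>u s. dist u x \<le> lam \<and> 0 < f u \<and> f u \<noteq> \<infinity> \<and> real_of_ereal (f u) \<le> real_of_ereal (f x)
     \<and> s \<in> subdiff f u
     \<and> p * real_of_ereal (f u) powr (p - 1) * norm s \<le> real_of_ereal (f x) powr p / lam"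
proof -
  define F where "F w = real_of_ereal (f w)" for w
  have fF: "f w = ereal (F w)" if "f w \<noteq> \<infinity>" for w
    using that nm unfolding F_def by (cases "f w") auto
  define g where "g = fplus_pow f p"
  have gfin: "g w = ereal ((max (F w) 0) powr p)" if "f w \<noteq> \<infinity>" for w
    using that p unfolding g_def fplus_pow_def cpow_def F_def by auto
  have ginf: "g w = \<infinity>" if "f w = \<infinity>" for w using that unfolding g_def fplus_pow_def by auto
  have gnn: "g w \<ge> 0" for w by (cases "f w = \<infinity>") (auto simp: gfin ginf)
  have glsc: "closed {w. g w \<le> ereal c}" for c
  proof (cases "c < 0")
    case True
    have "ereal c < g w" for w
    proof -
      have "ereal c < 0" using True by simp
      thus ?thesis using gnn[of w] by (rule less_le_trans)
    qed
    hence "{w. g w \<le> ereal c} = {}" by (auto simp: not_le)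
    thus ?thesis by simp
  next
    case False
    have eq: "{w. g w \<le> ereal c} = {w. f w \<le> ereal (c powr (1 / p))}"
    proof (intro Collect_cong iffI)
      fix w assume "g w \<le> ereal c"
      hence fw: "f w \<noteq> \<infinity>" using ginf by force
      hence "(max (F w) 0) powr p \<le> c" using \<open>g w \<le> ereal c\<close> gfin by simp
      hence "((max (F w) 0) powr p) powr (1 / p) \<le> c powr (1 / p)"
        using p by (intro powr_mono2) auto
      hence "max (F w) 0 \<le> c powr (1 / p)" using p by (simp add: powr_powr)
      thus "f w \<le> ereal (c powr (1 / p))" using fF[OF fw] by simp
    next
      fix w assume h: "f w \<le> ereal (c powr (1 / p))"
      hence fw: "f w \<noteq> \<infinity>" by auto
      have "max (F w) 0 \<le> c powr (1 / p)" using h fF[OF fw] by simp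
      hence "(max (F w) 0) powr p \<le> (c powr (1 / p)) powr p" using p by (intro powr_mono2) auto
      hence "(max (F w) 0) powr p \<le> c" using p False by (simp add: powr_powr)
      thus "g w \<le> ereal c" using gfin[OF fw] by simp
    qed
    have "closed {w. f w \<le> ereal (c powr (1 / p))}" using lsc unfolding lsc_ext_def by blast
    thus ?thesis unfolding eq .
  qed
  have Fx: "F x > 0" using fx fF[OF fx(2)] by simp
  define k where "k = F x powr p / lam"
  have k: "k > 0" unfolding k_def using Fx lam by simp
  have gx: "g x \<noteq> \<infinity>" using gfin[OF fx(2)] by simp
  obtain u where gu: "g u \<noteq> \<infinity>"
    and u1: "real_of_ereal (g u) + k * dist u x \<le> real_of_ereal (g x)"
    and u2: "\<And>w. g w \<noteq> \<infinity> \<Longrightarrow> real_of_ereal (g u) \<le> real_of_ereal (g w) + k * dist w u"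
    using ekeland[of g x k, OF glsc gnn gx k] by blast
  have fu: "f u \<noteq> \<infinity>" using gu ginf by force
  have rg: "real_of_ereal (g w) = (max (F w) 0) powr p" if "f w \<noteq> \<infinity>" for w using gfin[OF that] by simp
  have gxv: "real_of_ereal (g x) = F x powr p" using rg[OF fx(2)] Fx by simp
  have gu0: "real_of_ereal (g u) \<ge> 0" using rg[OF fu] by simp
  have "k * dist u x \<le> F x powr p" using u1 gxv gu0 by linarith
  hence dux: "dist u x \<le> lam" using k lam unfolding k_def by (simp add: field_simps)
  have Fu: "F u > 0"
  proof (rule ccontr)
    assume "\<not> F u > 0"
    hence "u \<in> {y. f y \<le> 0}" using fF[OF fu] by (simp add: zero_ereal_def)
    hence "infdist x {y. f y \<le> 0} \<le> dist x u" by (rule infdist_le)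
    thus False using dux lamd by (simp add: dist_commute)
  qed
  have guv: "real_of_ereal (g u) = F u powr p" using rg[OF fu] Fu by simp
  have FuFx: "F u \<le> F x"
  proof (rule ccontr)
    assume "\<not> F u \<le> F x"
    hence "F x powr p < F u powr p" using p Fx by (intro powr_less_mono2) auto
    moreover have "k * dist u x \<ge> 0" using k by simp
    hence "F u powr p \<le> F x powr p" using u1 gxv guv by linarith
    ultimately show False by simp
  qed
  define K where "K = k / (p * F u powr (p - 1))"
  have K: "K \<ge> 0" unfolding K_def using k p Fu by simp
  have glob: "F u - K * norm (w - u) \<le> F w" if fw: "f w \<noteq> \<infinity>" for w
  proof -
    define n where "n = norm (w - u)"
    define a0 where "a0 = F u"
    have a0: "a0 > 0" using Fu unfolding a0_def .
    define t where "t = min 1 (a0 powr p / (2 * (k * n + 1)))"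
    have n0: "n \<ge> 0" unfolding n_def by simp
    have "k * n \<ge> 0" using k n0 by simp
    hence kn: "k * n + 1 > 0" by linarith
    have t: "0 < t" "t \<le> 1" unfolding t_def using a0 kn by auto
    have tkn: "k * t * n \<le> a0 powr p / 2"
    proof -
      have "t \<le> a0 powr p / (2 * (k * n + 1))" unfolding t_def by simp
      hence "t * (2 * (k * n + 1)) \<le> a0 powr p" using kn by (simp add: pos_le_divide_eq)
      moreover have "k * t * n \<le> t * (k * n + 1)" using t k n0 by (simp add: algebra_simps)
      ultimately show ?thesis by (simp add: algebra_simps)
    qed
    define wt where "wt = (1 - t) *\<^sub>R u + t *\<^sub>R w"
    have cr: "f wt \<noteq> \<infinity> \<and> F wt \<le> (1 - t) * F u + t * F w"
      using conv_real[OF nm cv fu fw, of t] t unfolding wt_def F_def by simp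
    have dwt: "dist wt u = t * n"
    proof -
      have "wt - u = t *\<^sub>R (w - u)" unfolding wt_def by (simp add: algebra_simps)
      thus ?thesis unfolding dist_norm n_def using t by simp
    qed
    have fwt: "f wt \<noteq> \<infinity>" using cr by blast
    have gwt: "g wt \<noteq> \<infinity>" using gfin[OF fwt] by simp
    have e: "a0 powr p \<le> (max (F wt) 0) powr p + k * (t * n)"
      using u2[OF gwt] rg[OF fwt] guv dwt unfolding a0_def by simp
    have pos: "(max (F wt) 0) powr p > 0"
    proof -
      have "a0 powr p > 0" using a0 by simp
      moreover have "k * (t * n) = k * t * n" by simp
      ultimately show ?thesis using e tkn by linarith
    qed
    hence Fwt: "F wt > 0" by (cases "F wt > 0") (auto simp: max_def)
    define A where "A = (1 - t) * a0 + t * F w"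
    have A: "A \<ge> F wt" using cr unfolding A_def a0_def by simp
    have Apos: "A > 0" using A Fwt by simp
    have "F wt powr p \<le> A powr p" using A Fwt p by (intro powr_mono2) auto
    also have "\<dots> \<le> a0 powr p + p * a0 powr (p - 1) * (A - a0)" by (rule powr_tangent[OF Apos a0 p])
    also have "A - a0 = t * (F w - a0)" unfolding A_def by (simp add: algebra_simps)
    finally have "a0 powr p - k * (t * n) \<le> a0 powr p + p * a0 powr (p - 1) * (t * (F w - a0))"
      using e Fwt by (simp add: max_def)
    hence "- (k * n) * t \<le> (p * a0 powr (p - 1) * (F w - a0)) * t" by (simp add: algebra_simps)
    hence "- (k * n) \<le> p * a0 powr (p - 1) * (F w - a0)" by (rule mult_right_le_imp_le) (rule t(1))
    moreover have pa: "p * a0 powr (p - 1) > 0" using p a0 by simp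
    ultimately have "- (k * n) \<le> (F w - a0) * (p * a0 powr (p - 1))" by (metis mult.commute)
    hence "- (k * n) / (p * a0 powr (p - 1)) \<le> F w - a0" unfolding pos_divide_le_eq[OF pa] .
    thus ?thesis unfolding K_def n_def a0_def by (simp add: field_simps)
  qed
  obtain s where s: "s \<in> subdiff f u" and ns: "norm s \<le> K"
    using subgrad_exists[OF nm cv fu K] glob unfolding F_def by blast
  have pa: "p * F u powr (p - 1) > 0" using p Fu by simp
  have "p * F u powr (p - 1) * norm s \<le> p * F u powr (p - 1) * K" using ns pa by (intro mult_left_mono) auto
  also have "\<dots> = k"
  proof -
    have gen: "\<And>c::real. c \<noteq> 0 \<Longrightarrow> c * (k / c) = k" by simp
    show ?thesis unfolding K_def by (rule gen) (use pa in linarith)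
  qed
  finally have fin: "p * F u powr (p - 1) * norm s \<le> F x powr p / lam" unfolding k_def .
  have fu0: "0 < f u" using fF[OF fu] Fu by simp
  show ?thesis
    using dux fu0 fu FuFx s fin unfolding F_def
    by (intro exI[of _ u] exI[of _ s]) simp
qed



lemma alg_iii:
  fixes q d r :: real
  assumes q: "0 < q" "q < 1" and d: "d > 0" and r: "r > 0"
  shows "q powr q * (1 - q) powr (1 - q) * ((1 - q) * d) powr (q - 1) * (r / (q * d)) powr q = r powr q / d"
proof -
  have a: "((1 - q) * d) powr (q - 1) = (1 - q) powr (q - 1) * d powr (q - 1)" by (rule powr_mult)
  have b: "(r / (q * d)) powr q = r powr q / (q powr q * d powr q)" by (simp add: powr_divide powr_mult)
  have c: "(1 - q) powr (1 - q) * (1 - q) powr (q - 1) = 1"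
  proof -
    have "(1 - q) powr (1 - q) * (1 - q) powr (q - 1) = (1 - q) powr ((1 - q) + (q - 1))"
      by (rule powr_add[symmetric])
    thus ?thesis using q by simp
  qed
  have e: "d powr (q - 1) = d powr q / d" using d by (simp add: powr_diff)
  have qp: "q powr q > 0" using q by simp
  have dp: "d powr q > 0" using d by simp
  have "q powr q * (1 - q) powr (1 - q) * ((1 - q) * d) powr (q - 1) * (r / (q * d)) powr q
      = ((1 - q) powr (1 - q) * (1 - q) powr (q - 1)) * (q powr q * (d powr q / d) * (r powr q / (q powr q * d powr q)))"
    unfolding a b e by (simp add: algebra_simps)
  also have "\<dots> = r powr q / d" unfolding c using qp dp d by (simp add: field_simps)
  finally show ?thesis .
qed

context
  fixes f :: "'a::banach \<Rightarrow> ereal" and xb :: 'a and \<tau> q :: real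
  assumes nm: "\<forall>x. f x \<noteq> -\<infinity>"
    and cv: "convex_ext f" and lsc: "lsc_ext f"
    and fxb: "f xb \<le> 0"
    and tau: "\<tau> > 0" and q0: "0 < q" and q1: "q \<le> 1"
begin

definition "SS = {y. f y \<le> 0}"

lemma SS_closed: "closed SS"
proof -
  have "closed {y. f y \<le> ereal 0}" using lsc unfolding lsc_ext_def by blast
  thus ?thesis unfolding SS_def by (simp add: zero_ereal_def)
qed

lemma SS_ne: "SS \<noteq> {}" using fxb unfolding SS_def by auto

lemma dpos: "0 < f x \<Longrightarrow> infdist x SS > 0"
  using infdist_pos_not_in_closed[OF SS_closed SS_ne] unfolding SS_def by force

lemma FF: "f x \<noteq> \<infinity> \<Longrightarrow> f x = ereal (real_of_ereal (f x))"
  using nm by (cases "f x") auto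

lemma K1:
  assumes fx: "0 < f x" "f x \<noteq> \<infinity>" and s: "s \<in> subdiff f x"
  shows "real_of_ereal (f x) \<le> norm s * infdist x SS"
proof -
  define r where "r = real_of_ereal (f x)"
  have fr: "f x = ereal r" using FF[OF fx(2)] unfolding r_def .
  have r: "r > 0" using fx fr by simp
  have key: "r \<le> norm s * dist x y" if y: "y \<in> SS" for y
  proof -
    have "f y \<ge> f x + ereal (blinfun_apply s (y - x))" using s fx unfolding subdiff_def by auto
    moreover have "f y \<le> 0" using y unfolding SS_def by simp
    ultimately have "ereal (r + blinfun_apply s (y - x)) \<le> 0" using fr by (metis order_trans plus_ereal.simps(1))
    hence "r \<le> - blinfun_apply s (y - x)" by (simp add: zero_ereal_def)
    also have "\<dots> \<le> norm (blinfun_apply s (y - x))" by simp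
    also have "\<dots> \<le> norm s * norm (y - x)" by (rule norm_blinfun)
    finally show ?thesis by (simp add: dist_norm norm_minus_commute)
  qed
  have ns: "norm s > 0"
  proof (rule ccontr)
    assume "\<not> norm s > 0"
    hence "norm s = 0" by simp
    thus False using key[of xb] fxb r unfolding SS_def by simp
  qed
  have "r / norm s \<le> infdist x SS"
    unfolding infdist_def using SS_ne
  proof (simp, intro cINF_greatest)
    show "SS \<noteq> {}" by (rule SS_ne)
    fix y assume "y \<in> SS"
    thus "r / norm s \<le> dist x y" using key ns by (simp add: pos_divide_le_eq mult.commute)
  qed
  thus ?thesis unfolding r_def[symmetric] using ns by (simp add: pos_divide_le_eq mult.commute)
qed

lemma dsub_le: "s \<in> subdiff f x \<Longrightarrow> dsub f x \<le> ereal (norm s)"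
  unfolding dsub_def by (rule Inf_lower) (rule imageI)

lemma dsub_nn: "dsub f x \<ge> 0"
  unfolding dsub_def by (rule Inf_greatest) auto

lemma dsub_ge:
  assumes fx: "0 < f x" "f x \<noteq> \<infinity>"
  shows "ereal (real_of_ereal (f x) / infdist x SS) \<le> dsub f x"
  unfolding dsub_def
proof (rule Inf_greatest, elim imageE)
  fix z s assume z: "z = ereal (norm s)" and s: "s \<in> subdiff f x"
  have "real_of_ereal (f x) \<le> norm s * infdist x SS" by (rule K1[OF fx s])
  hence "real_of_ereal (f x) / infdist x SS \<le> norm s" using dpos[OF fx(1)] by (simp add: pos_divide_le_eq)
  thus "ereal (real_of_ereal (f x) / infdist x SS) \<le> z" using z by simp
qed

lemma cpow_pos: "r > 0 \<Longrightarrow> cpow r b = r powr b"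
  unfolding cpow_def by simp

lemma i_ii: "cond_i f xb q \<tau> \<Longrightarrow> cond_ii f xb q (q * \<tau>)"
proof -
  assume "cond_i f xb q \<tau>"
  then obtain U where U: "open U" "xb \<in> U" and h: "\<And>x. x \<in> U \<Longrightarrow> ereal (\<tau> * infdist x SS) \<le> fplus_pow f q x"
    unfolding cond_i_def SS_def by blast
  show ?thesis unfolding cond_ii_def
  proof (intro exI[of _ U] conjI U ballI impI, elim conjE)
    fix x assume x: "x \<in> U" and fx: "0 < f x" "f x \<noteq> \<infinity>"
    define r where "r = real_of_ereal (f x)"
    define d where "d = infdist x SS"
    have fr: "f x = ereal r" using FF[OF fx(2)] unfolding r_def .
    have r: "r > 0" using fx fr by simp
    have d: "d > 0" using dpos[OF fx(1)] unfolding d_def .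
    have "fplus_pow f q x = ereal (r powr q)" using fr r q0 unfolding fplus_pow_def cpow_def by simp
    hence td: "\<tau> * d \<le> r powr q" using h[OF x] unfolding d_def by simp
    have c: "q * cpow r (q - 1) = q * r powr (q - 1)" using cpow_pos[OF r] by simp
    have cpos: "q * r powr (q - 1) > 0" using q0 r by simp
    show "ereal (q * \<tau>) \<le> ereal (q * cpow (real_of_ereal (f x)) (q - 1)) * dsub f x"
    proof (cases "dsub f x = \<infinity>")
      case True thus ?thesis unfolding r_def[symmetric] c using cpos r by simp
    next
      case False
      then obtain D where D: "dsub f x = ereal D" using dsub_nn[of x] by (cases "dsub f x") auto
      have "ereal (r / d) \<le> ereal D" using dsub_ge[OF fx] D unfolding r_def d_def by simp
      hence Dge: "r / d \<le> D" by simp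
      have "q * \<tau> \<le> q * (r powr q / d)" using td d q0 by (simp add: pos_le_divide_eq mult.commute)
      also have "r powr q = r powr (q - 1) * r" using r by (simp add: powr_diff)
      also have "q * (r powr (q - 1) * r / d) = (q * r powr (q - 1)) * (r / d)" by simp
      also have "\<dots> \<le> (q * r powr (q - 1)) * D" using Dge cpos by (intro mult_left_mono) auto
      finally show ?thesis unfolding r_def[symmetric] c D by simp
    qed
  qed
qed


lemma mid: "(a::real) < b \<Longrightarrow> 0 \<le> a \<Longrightarrow> 0 < (a + b) / 2 \<and> (a + b) / 2 < b \<and> a < (a + b) / 2"
  by (simp add: field_simps)

lemma Cpos: "cpow q q * cpow (1 - q) (1 - q) > 0"
  using q0 q1 unfolding cpow_def by auto

lemma i_iii: "cond_i f xb q \<tau> \<Longrightarrow> cond_iii f xb q (cpow q q * cpow (1 - q) (1 - q) * \<tau>)"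
proof -
  assume "cond_i f xb q \<tau>"
  then obtain U where U: "open U" "xb \<in> U" and h: "\<And>x. x \<in> U \<Longrightarrow> ereal (\<tau> * infdist x SS) \<le> fplus_pow f q x"
    unfolding cond_i_def SS_def by blast
  define C where "C = cpow q q * cpow (1 - q) (1 - q)"
  have C: "C > 0" using Cpos unfolding C_def .
  show ?thesis unfolding cond_iii_def C_def[symmetric] SS_def[symmetric]
  proof (intro exI[of _ U] conjI U ballI impI, elim conjE)
    fix x assume x: "x \<in> U" and fx: "0 < f x" "f x \<noteq> \<infinity>"
    define r where "r = real_of_ereal (f x)"
    define d where "d = infdist x SS"
    have fr: "f x = ereal r" using FF[OF fx(2)] unfolding r_def .
    have r: "r > 0" using fx fr by simp
    have d: "d > 0" using dpos[OF fx(1)] unfolding d_def .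
    have "fplus_pow f q x = ereal (r powr q)" using fr r q0 unfolding fplus_pow_def cpow_def by simp
    hence td: "\<tau> * d \<le> r powr q" using h[OF x] unfolding d_def by simp
    have cd: "cpow (infdist x SS) (q - 1) = d powr (q - 1)" using cpow_pos[OF d] unfolding d_def .
    have cpos: "C * d powr (q - 1) > 0" using C d by simp
    show "ereal (C * \<tau>) \<le> ereal (C * cpow (infdist x SS) (q - 1)) * epow (dsub f x) q"
    proof (cases "dsub f x = \<infinity>")
      case True thus ?thesis using cpos d unfolding epow_def cd by simp
    next
      case False
      then obtain D where D: "dsub f x = ereal D" using dsub_nn[of x] by (cases "dsub f x") auto
      have "ereal (r / d) \<le> ereal D" using dsub_ge[OF fx] D unfolding r_def d_def by simp
      hence Dge: "r / d \<le> D" by simp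
      have ep: "epow (dsub f x) q = ereal (D powr q)" unfolding D epow_def cpow_def using q0 by simp
      have "\<tau> \<le> r powr q / d" using td d by (simp add: pos_le_divide_eq mult.commute)
      also have "r powr q / d = d powr (q - 1) * (r powr q / d powr q)"
        using d by (simp add: powr_diff field_simps)
      also have "r powr q / d powr q = (r / d) powr q" by (simp add: powr_divide)
      also have "(r / d) powr q \<le> D powr q" using Dge r d q0 by (intro powr_mono2) auto
      finally have "\<tau> \<le> d powr (q - 1) * D powr q" using d by (simp add: mult_left_mono)
      hence "C * \<tau> \<le> C * d powr (q - 1) * D powr q" using C by (simp add: mult.assoc)
      thus ?thesis unfolding ep cd by simp
    qed
  qed
qed

lemma ball_half:
  assumes "open U" "xb \<in> U"
  obtains \<delta> where "\<delta> > 0" "\<And>x u. dist x xb < \<delta> / 2 \<Longrightarrow> dist u x < \<delta> / 2 \<Longrightarrow> u \<in> U"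
proof -
  obtain \<delta> where \<delta>: "\<delta> > 0" "ball xb \<delta> \<subseteq> U" using assms open_contains_ball by blast
  have "u \<in> U" if "dist x xb < \<delta> / 2" "dist u x < \<delta> / 2" for x u
  proof -
    have "dist xb u \<le> dist x xb + dist u x" using dist_triangle[of xb u x] by (simp add: dist_commute)
    hence "dist xb u < \<delta>" using that by linarith
    thus ?thesis using \<delta> by auto
  qed
  thus ?thesis using that \<delta> by blast
qed

lemma easy_cases:
  assumes "\<not> (0 < f x \<and> f x \<noteq> \<infinity>)"
  shows "ereal (\<tau> * infdist x SS) \<le> fplus_pow f q x"
proof (cases "f x = \<infinity>")
  case True thus ?thesis unfolding fplus_pow_def by simp
next
  case False
  hence "f x \<le> 0" using assms by auto
  hence "x \<in> SS" unfolding SS_def by simp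
  hence "infdist x SS = 0" by simp
  moreover have "fplus_pow f q x \<ge> 0" using False unfolding fplus_pow_def cpow_def by simp
  ultimately show ?thesis by (simp add: zero_ereal_def)
qed

lemma ii_i: "cond_ii f xb q \<tau> \<Longrightarrow> cond_i f xb q \<tau>"
proof -
  assume "cond_ii f xb q \<tau>"
  then obtain U where U: "open U" "xb \<in> U" and h: "\<And>x. x \<in> U \<Longrightarrow> 0 < f x \<Longrightarrow> f x \<noteq> \<infinity> \<Longrightarrow>
      ereal (q * cpow (real_of_ereal (f x)) (q - 1)) * dsub f x \<ge> ereal \<tau>"
    unfolding cond_ii_def by blast
  obtain \<delta> where \<delta>: "\<delta> > 0" and inU: "\<And>x u. dist x xb < \<delta> / 2 \<Longrightarrow> dist u x < \<delta> / 2 \<Longrightarrow> u \<in> U"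
    using ball_half[OF U] by blast
  show ?thesis unfolding cond_i_def SS_def[symmetric]
  proof (intro exI[of _ "ball xb (\<delta> / 2)"] conjI ballI)
    show "xb \<in> ball xb (\<delta> / 2)" using \<delta> by simp
    fix x assume x: "x \<in> ball xb (\<delta> / 2)"
    show "ereal (\<tau> * infdist x SS) \<le> fplus_pow f q x"
    proof (cases "0 < f x \<and> f x \<noteq> \<infinity>")
      case False thus ?thesis by (rule easy_cases)
    next
      case True
      hence fx: "0 < f x" "f x \<noteq> \<infinity>" by auto
      define r where "r = real_of_ereal (f x)"
      define d where "d = infdist x SS"
      have fr: "f x = ereal r" using FF[OF fx(2)] unfolding r_def .
      have r: "r > 0" using fx fr by simp
      have fp: "fplus_pow f q x = ereal (r powr q)" using fr r q0 unfolding fplus_pow_def cpow_def by simp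
      show ?thesis
      proof (rule ccontr)
        assume "\<not> ?thesis"
        hence lt: "r powr q < \<tau> * d" unfolding fp d_def by simp
        have dx: "d < \<delta> / 2"
        proof -
          have "d \<le> dist x xb" unfolding d_def using fxb by (intro infdist_le) (simp add: SS_def)
          thus ?thesis using x by (simp add: dist_commute)
        qed
        define lam where "lam = (r powr q / \<tau> + d) / 2"
        have rq: "r powr q / \<tau> < d" using lt tau by (simp add: divide_less_eq mult.commute)
        have nn: "r powr q / \<tau> \<ge> 0" using tau by simp
        have lam1: "lam > 0" unfolding lam_def using mid[OF rq nn] by blast
        have lam2: "lam < d" unfolding lam_def using mid[OF rq nn] by blast
        have lam3: "r powr q / \<tau> < lam" unfolding lam_def using mid[OF rq nn] by blast
        note lam = lam1 lam2 lam3
        obtain u s where u: "dist u x \<le> lam" "0 < f u" "f u \<noteq> \<infinity>" and s: "s \<in> subdiff f u"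
          and sl: "q * real_of_ereal (f u) powr (q - 1) * norm s \<le> real_of_ereal (f x) powr q / lam"
          using slope_point[OF nm cv lsc q0 q1 fx lam(1)] lam(2) unfolding d_def SS_def by blast
        have uU: "u \<in> U" using inU[of x u] x u(1) lam dx by (simp add: dist_commute)
        have Fu: "real_of_ereal (f u) > 0" using u FF[of u] by (metis ereal_less(2) less_ereal.simps(1) zero_ereal_def)
        have cp: "cpow (real_of_ereal (f u)) (q - 1) = real_of_ereal (f u) powr (q - 1)" using cpow_pos[OF Fu] .
        have c0: "q * real_of_ereal (f u) powr (q - 1) \<ge> 0" using q0 by simp
        have "ereal \<tau> \<le> ereal (q * real_of_ereal (f u) powr (q - 1)) * dsub f u"
          using h[OF uU u(2,3)] unfolding cp .
        also have "\<dots> \<le> ereal (q * real_of_ereal (f u) powr (q - 1)) * ereal (norm s)"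
          using dsub_le[OF s] c0 by (intro ereal_mult_left_mono) auto
        finally have "\<tau> \<le> q * real_of_ereal (f u) powr (q - 1) * norm s" by simp
        also have "\<dots> \<le> r powr q / lam" using sl unfolding r_def .
        also have "\<dots> < \<tau>" using lam tau by (simp add: divide_less_eq mult.commute)
        finally show False by simp
      qed
    qed
  qed (simp)
qed

lemma iii_i: "cond_iii f xb q \<tau> \<Longrightarrow> cond_i f xb q \<tau>"
proof -
  assume "cond_iii f xb q \<tau>"
  then obtain U where U: "open U" "xb \<in> U" and h: "\<And>x. x \<in> U \<Longrightarrow> 0 < f x \<Longrightarrow> f x \<noteq> \<infinity> \<Longrightarrow>
      ereal (cpow q q * cpow (1 - q) (1 - q) * cpow (infdist x SS) (q - 1)) * epow (dsub f x) q \<ge> ereal \<tau>"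
    unfolding cond_iii_def SS_def by blast
  define C where "C = cpow q q * cpow (1 - q) (1 - q)"
  have C: "C > 0" using Cpos unfolding C_def .
  obtain \<delta> where \<delta>: "\<delta> > 0" and inU: "\<And>x u. dist x xb < \<delta> / 2 \<Longrightarrow> dist u x < \<delta> / 2 \<Longrightarrow> u \<in> U"
    using ball_half[OF U] by blast
  show ?thesis unfolding cond_i_def SS_def[symmetric]
  proof (intro exI[of _ "ball xb (\<delta> / 2)"] conjI ballI)
    show "xb \<in> ball xb (\<delta> / 2)" using \<delta> by simp
    fix x assume x: "x \<in> ball xb (\<delta> / 2)"
    show "ereal (\<tau> * infdist x SS) \<le> fplus_pow f q x"
    proof (cases "0 < f x \<and> f x \<noteq> \<infinity>")
      case False thus ?thesis by (rule easy_cases)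
    next
      case True
      hence fx: "0 < f x" "f x \<noteq> \<infinity>" by auto
      define r where "r = real_of_ereal (f x)"
      define d where "d = infdist x SS"
      have fr: "f x = ereal r" using FF[OF fx(2)] unfolding r_def .
      have r: "r > 0" using fx fr by simp
      have fp: "fplus_pow f q x = ereal (r powr q)" using fr r q0 unfolding fplus_pow_def cpow_def by simp
      show ?thesis
      proof (rule ccontr)
        assume "\<not> ?thesis"
        hence lt: "r powr q < \<tau> * d" unfolding fp d_def by simp
        have dx: "d < \<delta> / 2"
        proof -
          have "d \<le> dist x xb" unfolding d_def using fxb by (intro infdist_le) (simp add: SS_def)
          thus ?thesis using x by (simp add: dist_commute)
        qed
        define d' where "d' = (r powr q / \<tau> + d) / 2"
        have rq: "r powr q / \<tau> < d" using lt tau by (simp add: divide_less_eq mult.commute)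
        have nn: "r powr q / \<tau> \<ge> 0" using tau by simp
        have d'1: "d' > 0" unfolding d'_def using mid[OF rq nn] by blast
        have d'2: "d' < d" unfolding d'_def using mid[OF rq nn] by blast
        have d'3: "r powr q / \<tau> < d'" unfolding d'_def using mid[OF rq nn] by blast
        note d' = d'1 d'2 d'3
        define lam where "lam = q * d'"
        have lam: "lam > 0" "lam \<le> d'" using d' q0 q1 unfolding lam_def by (auto simp: mult_le_cancel_right1)
        have lamd: "lam < infdist x {y. f y \<le> 0}" using lam d' unfolding d_def SS_def by simp
        have one: "(0::real) < 1" "(1::real) \<le> 1" by simp_all
        obtain u s where u: "dist u x \<le> lam" "0 < f u" "f u \<noteq> \<infinity>" and s: "s \<in> subdiff f u"
          and sl: "1 * real_of_ereal (f u) powr (1 - 1) * norm s \<le> real_of_ereal (f x) powr 1 / lam"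
          using slope_point[OF nm cv lsc one fx lam(1) lamd] by blast
        have uU: "u \<in> U" using inU[of x u] x u(1) lam d' dx by (simp add: dist_commute)
        have Fu: "real_of_ereal (f u) > 0" using u FF[of u] by (metis ereal_less(2) less_ereal.simps(1) zero_ereal_def)
        have p1: "real_of_ereal (f x) powr 1 = r" unfolding r_def[symmetric] using r by (simp add: abs_of_pos)
        have p2: "1 * real_of_ereal (f u) powr (1 - 1) * norm s = norm s" using Fu by simp
        have ns: "norm s \<le> r / lam" using sl unfolding p1 p2 .
        define du where "du = infdist u SS"
        have du: "du > 0" using dpos[OF u(2)] unfolding du_def .
        have dud: "du \<ge> (1 - q) * d'"
        proof -
          have "d \<le> du + dist x u" unfolding d_def du_def by (rule infdist_triangle)
          hence "d - lam \<le> du" using u(1) by (simp add: dist_commute)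
          moreover have "(1 - q) * d' \<le> d - lam" using d' unfolding lam_def by (simp add: algebra_simps)
          ultimately show ?thesis by linarith
        qed
        obtain D where D: "dsub f u = ereal D" "0 \<le> D" "D \<le> norm s"
        proof -
          have "dsub f u \<le> ereal (norm s)" by (rule dsub_le[OF s])
          moreover have "dsub f u \<ge> 0" by (rule dsub_nn)
          ultimately show ?thesis using that by (cases "dsub f u") auto
        qed
        have ep: "epow (dsub f u) q = ereal (D powr q)" unfolding D epow_def cpow_def using q0 by simp
        have Dq: "D powr q \<le> (r / lam) powr q" using D ns q0 by (intro powr_mono2) auto
        have cdu: "cpow du (q - 1) = du powr (q - 1)" using cpow_pos[OF du] .
        have "ereal \<tau> \<le> ereal (C * du powr (q - 1)) * ereal (D powr q)"
          using h[OF uU u(2,3)] unfolding C_def[symmetric] du_def[symmetric] cdu ep .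
        hence "\<tau> \<le> C * du powr (q - 1) * D powr q" by simp
        also have "\<dots> \<le> C * du powr (q - 1) * (r / lam) powr q"
          using Dq C by (intro mult_left_mono) auto
        finally have tb: "\<tau> \<le> C * du powr (q - 1) * (r / lam) powr q" .
        have "C * du powr (q - 1) * (r / lam) powr q \<le> r powr q / d'"
        proof (cases "q = 1")
          case True
          have "C = 1" unfolding C_def cpow_def using True by simp
          thus ?thesis using True r d' unfolding lam_def by simp
        next
          case False
          hence q1': "q < 1" using q1 by simp
          have "du powr (q - 1) \<le> ((1 - q) * d') powr (q - 1)"
            using dud q1' d' by (intro powr_mono2') auto
          hence "C * du powr (q - 1) * (r / lam) powr q \<le> C * ((1 - q) * d') powr (q - 1) * (r / lam) powr q"
            using C by (intro mult_right_mono mult_left_mono) auto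
          also have "C * ((1 - q) * d') powr (q - 1) * (r / lam) powr q = r powr q / d'"
          proof -
            have Ceq: "C = q powr q * (1 - q) powr (1 - q)" unfolding C_def cpow_def using q0 q1' by simp
            show ?thesis unfolding Ceq lam_def by (rule alg_iii[OF q0 q1' d'(1) r])
          qed
          finally show ?thesis .
        qed
        also have "r powr q / d' < \<tau>" using d' tau by (simp add: divide_less_eq mult.commute)
        finally show False using tb by simp
      qed
    qed
  qed (simp)
qed

end


theorem theorem3p34:
  fixes f :: "'a::banach \<Rightarrow> ereal" and xb :: 'a and \<tau> q :: real
  assumes "\<forall>x. f x \<noteq> -\<infinity>"
    and "convex_ext f" and "lsc_ext f"
    and "f xb \<le> 0"
    and "\<tau> > 0" and "0 < q" and "q \<le> 1"
  shows "(cond_ii f xb q \<tau> \<longrightarrow> cond_i f xb q \<tau>)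
       \<and> (cond_i f xb q \<tau> \<longrightarrow> cond_ii f xb q (q * \<tau>))
       \<and> (cond_iii f xb q \<tau> \<longrightarrow> cond_i f xb q \<tau>)
       \<and> (cond_i f xb q \<tau> \<longrightarrow> cond_iii f xb q (cpow q q * cpow (1 - q) (1 - q) * \<tau>))
       \<and> (q = 1 \<longrightarrow> (cond_i f xb q \<tau> \<longleftrightarrow> cond_ii f xb q \<tau>)
                  \<and> (cond_i f xb q \<tau> \<longleftrightarrow> cond_iii f xb q \<tau>))"
proof -
  have a: "cond_ii f xb q \<tau> \<longrightarrow> cond_i f xb q \<tau>" using ii_i[OF assms] by blast
  have b: "cond_i f xb q \<tau> \<longrightarrow> cond_ii f xb q (q * \<tau>)" using i_ii[OF assms] by blast
  have c: "cond_iii f xb q \<tau> \<longrightarrow> cond_i f xb q \<tau>" using iii_i[OF assms] by blast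
  have d: "cond_i f xb q \<tau> \<longrightarrow> cond_iii f xb q (cpow q q * cpow (1 - q) (1 - q) * \<tau>)"
    using i_iii[OF assms] by blast
  have e: "q = 1 \<longrightarrow> (cond_i f xb q \<tau> \<longleftrightarrow> cond_ii f xb q \<tau>) \<and> (cond_i f xb q \<tau> \<longleftrightarrow> cond_iii f xb q \<tau>)"
  proof
    assume q: "q = 1"
    have e1: "q * \<tau> = \<tau>" using q by simp
    have e2: "cpow q q * cpow (1 - q) (1 - q) * \<tau> = \<tau>" using q unfolding cpow_def by simp
    show "(cond_i f xb q \<tau> \<longleftrightarrow> cond_ii f xb q \<tau>) \<and> (cond_i f xb q \<tau> \<longleftrightarrow> cond_iii f xb q \<tau>)"
      using a b c d unfolding e1 e2 by blast
  qed
  show ?thesis using a b c d e by blast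
qed

end
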